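(* Let $K$ be a field, $X$ a finite connected poset and $S\subseteq J(I(X,K))$. Then the ideal $\langle S\rangle$ of $I(X,K)$ generated by $S$ coincides with the Lie ideal $\langle S\rangle_L$ of $I(X,K)$ generated by $S$. Consequently, every Lie ideal of $I(X,K)$ contained in $J(I(X,K))$ is an (associative) ideal.
   Context: $I(X,K)$ is the incidence algebra: functions $f:X\times X\to K$ with $f(x,y)=0$ unless $x\le y$, product $(fg)(x,y)=\sum_{x\le t\le y}f(x,t)g(t,y)$, Lie bracket $[f,g]=fg-gf$. $J(I(X,K))=\{f: f(x,x)=0\ \forall x\}$ is the Jacobson radical. Connected means any two elements are joined by a sequence in which consecutive elements are in a covering relation. *)

theory Defs
  imports Main
begin

text \<open>A finite poset is modelled as a finite subset X of a type with a partial order,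
  carrying the induced order. Elements of the incidence algebra I(X,K) are functions
  f :: 'a => 'a => 'k vanishing outside {(x,y). x,y in X, x <= y}.\<close>

definition incidence :: "'a::order set \<Rightarrow> ('a \<Rightarrow> 'a \<Rightarrow> 'k::field) set" where
  "incidence X = {f. \<forall>x y. f x y \<noteq> 0 \<longrightarrow> x \<in> X \<and> y \<in> X \<and> x \<le> y}"

definition inc_mult :: "'a::order set \<Rightarrow> ('a \<Rightarrow> 'a \<Rightarrow> 'k::field) \<Rightarrow> ('a \<Rightarrow> 'a \<Rightarrow> 'k) \<Rightarrow> ('a \<Rightarrow> 'a \<Rightarrow> 'k)" where
  "inc_mult X f g = (\<lambda>x y. \<Sum>t\<in>{t\<in>X. x \<le> t \<and> t \<le> y}. f x t * g t y)"

definition inc_bracket :: "'a::order set \<Rightarrow> ('a \<Rightarrow> 'a \<Rightarrow> 'k::field) \<Rightarrow> ('a \<Rightarrow> 'a \<Rightarrow> 'k) \<Rightarrow> ('a \<Rightarrow> 'a \<Rightarrow> 'k)" where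
  "inc_bracket X f g = (\<lambda>x y. inc_mult X f g x y - inc_mult X g f x y)"

definition jacobson :: "'a::order set \<Rightarrow> ('a \<Rightarrow> 'a \<Rightarrow> 'k::field) set" where
  "jacobson X = {f \<in> incidence X. \<forall>x\<in>X. f x x = 0}"

definition inc_subspace :: "'a::order set \<Rightarrow> ('a \<Rightarrow> 'a \<Rightarrow> 'k::field) set \<Rightarrow> bool" where
  "inc_subspace X A \<longleftrightarrow> A \<subseteq> incidence X \<and> (\<lambda>x y. 0) \<in> A \<and>
     (\<forall>f\<in>A. \<forall>g\<in>A. (\<lambda>x y. f x y + g x y) \<in> A) \<and> (\<forall>c. \<forall>f\<in>A. (\<lambda>x y. c * f x y) \<in> A)"

definition inc_ideal :: "'a::order set \<Rightarrow> ('a \<Rightarrow> 'a \<Rightarrow> 'k::field) set \<Rightarrow> bool" where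
  "inc_ideal X A \<longleftrightarrow> inc_subspace X A \<and>
     (\<forall>f\<in>incidence X. \<forall>g\<in>A. inc_mult X f g \<in> A \<and> inc_mult X g f \<in> A)"

definition inc_lie_ideal :: "'a::order set \<Rightarrow> ('a \<Rightarrow> 'a \<Rightarrow> 'k::field) set \<Rightarrow> bool" where
  "inc_lie_ideal X A \<longleftrightarrow> inc_subspace X A \<and>
     (\<forall>f\<in>incidence X. \<forall>g\<in>A. inc_bracket X f g \<in> A)"

definition ideal_gen :: "'a::order set \<Rightarrow> ('a \<Rightarrow> 'a \<Rightarrow> 'k::field) set \<Rightarrow> ('a \<Rightarrow> 'a \<Rightarrow> 'k) set" where
  "ideal_gen X S = \<Inter>{A. inc_ideal X A \<and> S \<subseteq> A}"

definition lie_ideal_gen :: "'a::order set \<Rightarrow> ('a \<Rightarrow> 'a \<Rightarrow> 'k::field) set \<Rightarrow> ('a \<Rightarrow> 'a \<Rightarrow> 'k) set" where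
  "lie_ideal_gen X S = \<Inter>{A. inc_lie_ideal X A \<and> S \<subseteq> A}"

definition covers :: "'a::order set \<Rightarrow> 'a \<Rightarrow> 'a \<Rightarrow> bool" where
  "covers X x y \<longleftrightarrow> x \<in> X \<and> y \<in> X \<and> x < y \<and> \<not> (\<exists>z\<in>X. x < z \<and> z < y)"

definition poset_connected :: "'a::order set \<Rightarrow> bool" where
  "poset_connected X \<longleftrightarrow>
     (\<forall>x\<in>X. \<forall>y\<in>X. (\<lambda>u v. covers X u v \<or> covers X v u)\<^sup>*\<^sup>* x y)"

end

theory Submission
  imports Defs
begin

definition EU :: "'a \<Rightarrow> 'a \<Rightarrow> 'a \<Rightarrow> 'a \<Rightarrow> 'k::field" where
  "EU a b = (\<lambda>u v. if u = a \<and> v = b then 1 else 0)"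

lemma EU_inc: "a \<in> X \<Longrightarrow> b \<in> X \<Longrightarrow> a \<le> b \<Longrightarrow> (EU a b :: _ \<Rightarrow> _ \<Rightarrow> 'k::field) \<in> incidence X"
  by (auto simp: EU_def incidence_def)

lemma mult_EU_left:
  assumes "finite X" "b \<in> X" "a \<le> b"
  shows "inc_mult X (EU a b) h p q = (if p = a \<and> b \<le> q then h b q else 0)"
proof -
  have "inc_mult X (EU a b) h p q = (\<Sum>t\<in>{t\<in>X. p \<le> t \<and> t \<le> q}. if t = b then (if p = a then h t q else 0) else 0)"
    unfolding inc_mult_def EU_def by (intro sum.cong) auto
  also have "\<dots> = (if b \<in> {t\<in>X. p \<le> t \<and> t \<le> q} then (if p = a then h b q else 0) else 0)"
    using assms(1) by (subst sum.delta) auto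
  finally show ?thesis using assms by auto
qed

lemma mult_EU_right:
  assumes "finite X" "a \<in> X" "a \<le> b"
  shows "inc_mult X h (EU a b) p q = (if q = b \<and> p \<le> a then h p a else 0)"
proof -
  have "inc_mult X h (EU a b) p q = (\<Sum>t\<in>{t\<in>X. p \<le> t \<and> t \<le> q}. if t = a then (if q = b then h p t else 0) else 0)"
    unfolding inc_mult_def EU_def by (intro sum.cong) auto
  also have "\<dots> = (if a \<in> {t\<in>X. p \<le> t \<and> t \<le> q} then (if q = b then h p a else 0) else 0)"
    using assms(1) by (subst sum.delta) auto
  finally show ?thesis using assms by auto
qed

lemma bracket_EU:
  assumes "finite X" "a \<in> X" "b \<in> X" "a \<le> b"
  shows "inc_bracket X (EU a b) h = (\<lambda>p q. (if p = a \<and> b \<le> q then h b q else 0) - (if q = b \<and> p \<le> a then h p a else 0))"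
  unfolding inc_bracket_def using assms by (simp add: mult_EU_left mult_EU_right)

lemma sub_scale: "inc_subspace X L \<Longrightarrow> f \<in> L \<Longrightarrow> (\<lambda>x y. c * f x y) \<in> L"
  unfolding inc_subspace_def by blast

lemma sub_add: "inc_subspace X L \<Longrightarrow> f \<in> L \<Longrightarrow> g \<in> L \<Longrightarrow> (\<lambda>x y. f x y + g x y) \<in> L"
  unfolding inc_subspace_def by blast

lemma sub_zero: "inc_subspace X L \<Longrightarrow> (\<lambda>x y. 0) \<in> L"
  unfolding inc_subspace_def by blast

lemma sub_sum:
  assumes "inc_subspace X L" "finite I" "\<And>i. i \<in> I \<Longrightarrow> F i \<in> L"
  shows "(\<lambda>x y. \<Sum>i\<in>I. F i x y) \<in> L"
  using assms(2,3)
proof (induction I rule: finite_induct)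
  case empty thus ?case using sub_zero[OF assms(1)] by simp
next
  case (insert i I)
  have "(\<lambda>x y. F i x y + (\<Sum>i\<in>I. F i x y)) \<in> L"
    using insert by (intro sub_add[OF assms(1)]) auto
  thus ?case using insert by simp
qed

lemma mult_inc:
  assumes "g \<in> incidence X" "f \<in> incidence X"
  shows "inc_mult X g f \<in> incidence X"
proof -
  { fix x y assume "inc_mult X g f x y \<noteq> 0"
    hence "\<exists>t\<in>{t\<in>X. x \<le> t \<and> t \<le> y}. g x t * f t y \<noteq> 0"
      unfolding inc_mult_def by (meson sum.neutral)
    then obtain t where t: "t \<in> X" "x \<le> t" "t \<le> y" "g x t \<noteq> 0" "f t y \<noteq> 0"
      by auto
    have "x \<in> X" "y \<in> X" using t assms unfolding incidence_def by blast+
    hence "x \<in> X \<and> y \<in> X \<and> x \<le> y" using t by (meson order_trans) }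
  thus ?thesis unfolding incidence_def by blast
qed

lemma mult_diag:
  assumes "x \<in> X"
  shows "inc_mult X g f x x = g x x * f x x"
proof -
  have "{t\<in>X. x \<le> t \<and> t \<le> x} = {x}" using assms by (auto intro: order_antisym)
  thus ?thesis unfolding inc_mult_def by simp
qed

lemma jac_lie: "inc_lie_ideal X (jacobson X :: ('a::order \<Rightarrow> 'a \<Rightarrow> 'k::field) set)"
proof -
  define JJ where "JJ = (jacobson X :: ('a \<Rightarrow> 'a \<Rightarrow> 'k) set)"
  have inc: "(\<lambda>x y. c * f x y) \<in> incidence X" "(\<lambda>x y. f x y + g x y) \<in> incidence X"
    if "f \<in> incidence X" "g \<in> incidence X" for f g :: "'a \<Rightarrow> 'a \<Rightarrow> 'k" and c
  proof -
    show "(\<lambda>x y. c * f x y) \<in> incidence X" using that(1) unfolding incidence_def by auto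
    { fix x y assume "f x y + g x y \<noteq> 0"
      hence "f x y \<noteq> 0 \<or> g x y \<noteq> 0" by auto
      hence "x \<in> X \<and> y \<in> X \<and> x \<le> y" using that unfolding incidence_def by blast }
    thus "(\<lambda>x y. f x y + g x y) \<in> incidence X" unfolding incidence_def by blast
  qed
  have z: "(\<lambda>x y. 0) \<in> JJ" by (simp add: JJ_def jacobson_def incidence_def)
  have sub: "inc_subspace X JJ"
  proof -
    have 1: "JJ \<subseteq> incidence X" by (auto simp: JJ_def jacobson_def)
    have 2: "\<forall>f\<in>JJ. \<forall>g\<in>JJ. (\<lambda>x y. f x y + g x y) \<in> JJ"
    proof (intro ballI)
      fix f g assume "f \<in> JJ" "g \<in> JJ"
      thus "(\<lambda>x y. f x y + g x y) \<in> JJ" using inc(2)[of f g] by (simp add: JJ_def jacobson_def)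
    qed
    have 3: "\<forall>c. \<forall>f\<in>JJ. (\<lambda>x y. c * f x y) \<in> JJ"
    proof (intro ballI allI)
      fix c f assume "f \<in> JJ"
      thus "(\<lambda>x y. c * f x y) \<in> JJ" using inc(1)[of f f c] by (simp add: JJ_def jacobson_def)
    qed
    show ?thesis unfolding inc_subspace_def using 1 2 3 z by blast
  qed
  have br: "inc_bracket X g f \<in> JJ" if "g \<in> incidence X" "f \<in> JJ" for g f
  proof -
    have fi: "f \<in> incidence X" using that by (simp add: JJ_def jacobson_def)
    have "(\<lambda>x y. inc_mult X g f x y + (-1) * inc_mult X f g x y) \<in> incidence X"
      by (rule inc(2)[OF mult_inc[OF that(1) fi] inc(1)[OF mult_inc[OF fi that(1)] mult_inc[OF fi that(1)]]])
    moreover have "\<forall>x\<in>X. inc_bracket X g f x x = 0"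
      using that by (simp add: inc_bracket_def mult_diag JJ_def jacobson_def)
    ultimately show ?thesis unfolding JJ_def jacobson_def inc_bracket_def by simp
  qed
  show ?thesis unfolding inc_lie_ideal_def JJ_def[symmetric] using sub br by blast
qed

lemma lie_sub: "inc_lie_ideal X L \<Longrightarrow> inc_subspace X L"
  unfolding inc_lie_ideal_def by blast

lemma lie_br: "inc_lie_ideal X L \<Longrightarrow> g \<in> incidence X \<Longrightarrow> f \<in> L \<Longrightarrow> inc_bracket X g f \<in> L"
  unfolding inc_lie_ideal_def by blast

lemma single_entry:
  assumes fin: "finite X" and L: "inc_lie_ideal X L" and LJ: "L \<subseteq> jacobson X"
    and f: "f \<in> L" and xy: "x \<in> X" "y \<in> X" "x < y"
  shows "(\<lambda>u v. if u = x \<and> v = y then f x y else 0) \<in> L"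
proof -
  have finc: "f \<in> incidence X" using f LJ by (auto simp: jacobson_def)
  have fyx: "f y x = 0"
  proof (rule ccontr)
    assume "f y x \<noteq> 0"
    hence "y \<le> x" using finc unfolding incidence_def by blast
    thus False using xy(3) by simp
  qed
  define g where "g = inc_bracket X (EU x x) f"
  have g: "g \<in> L" unfolding g_def using lie_br[OF L EU_inc[OF xy(1) xy(1)] f] by simp
  have gv: "g = (\<lambda>p q. (if p = x \<and> x \<le> q then f x q else 0) - (if q = x \<and> p \<le> x then f p x else 0))"
    unfolding g_def bracket_EU[OF fin xy(1) xy(1) order_refl] by simp
  define h where "h = inc_bracket X (EU y y) g"
  have h: "h \<in> L" unfolding h_def using lie_br[OF L EU_inc[OF xy(2) xy(2)] g] by simp
  have hv: "h = (\<lambda>u v. (-1) * (if u = x \<and> v = y then f x y else 0))"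
  proof (intro ext)
    fix u v
    have "h u v = (if u = y \<and> y \<le> v then g y v else 0) - (if v = y \<and> u \<le> y then g u y else 0)"
      unfolding h_def bracket_EU[OF fin xy(2) xy(2) order_refl] by simp
    also have "\<dots> = (-1) * (if u = x \<and> v = y then f x y else 0)"
      using xy fyx unfolding gv by (auto dest: order.antisym)
    finally show "h u v = (-1) * (if u = x \<and> v = y then f x y else 0)" .
  qed
  have "(\<lambda>u v. (-1) * h u v) \<in> L" using sub_scale[OF lie_sub[OF L] h] .
  thus ?thesis unfolding hv by simp
qed

lemma entry2:
  assumes fin: "finite X" and L: "inc_lie_ideal X L" and LJ: "L \<subseteq> jacobson X"
    and f: "f \<in> L" and xy: "x \<in> X" "y \<in> X" "x < y" and a: "a \<in> X" "a \<le> x"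
  shows "(\<lambda>u v. if u = a \<and> v = y then f x y else 0) \<in> L"
proof (cases "a = x")
  case True thus ?thesis using single_entry[OF assms(1-7)] by simp
next
  case False
  define h where "h = (\<lambda>u v. if u = x \<and> v = y then f x y else 0)"
  have h: "h \<in> L" unfolding h_def using single_entry[OF assms(1-7)] .
  have "inc_bracket X (EU a x) h \<in> L" using lie_br[OF L EU_inc[OF a(1) xy(1) a(2)] h] .
  moreover have "inc_bracket X (EU a x) h = (\<lambda>u v. if u = a \<and> v = y then f x y else 0)"
    unfolding bracket_EU[OF fin a(1) xy(1) a(2)] h_def
    using False xy a by (intro ext) (auto dest: order.antisym)
  ultimately show ?thesis by simp
qed

lemma core_left:
  assumes fin: "finite X" and L: "inc_lie_ideal X L" and LJ: "L \<subseteq> jacobson X"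
    and f: "f \<in> L" and g: "g \<in> incidence X"
  shows "inc_mult X g f \<in> L"
proof -
  have sub: "inc_subspace X L" using lie_sub[OF L] .
  have finc: "f \<in> incidence X" and fd: "\<forall>x\<in>X. f x x = 0" using f LJ by (auto simp: jacobson_def)
  define T where "T = (\<lambda>b a c. (\<lambda>p q. if p = a \<and> q = c then g a b * f b c else 0))"
  have T: "T b a c \<in> L" if "a \<in> X" "b \<in> X" "c \<in> X" for a b c
  proof (cases "a \<le> b \<and> b < c")
    case True
    have "(\<lambda>p q. g a b * (if p = a \<and> q = c then f b c else 0)) \<in> L"
      using sub_scale[OF sub entry2[OF fin L LJ f that(2) that(3) _ that(1)]] True by simp
    thus ?thesis unfolding T_def by (simp add: if_distrib cong: if_cong)
  next
    case False
    have z: "g a b * f b c = 0"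
    proof (cases "a \<le> b")
      case True
      hence "\<not> b < c" using False by simp
      hence "b = c \<or> \<not> b \<le> c" by auto
      thus ?thesis using finc fd that unfolding incidence_def by auto
    next
      case False thus ?thesis using g unfolding incidence_def by auto
    qed
    have "T b a c = (\<lambda>p q. 0)" unfolding T_def by (intro ext) (simp add: z)
    thus ?thesis using sub_zero[OF sub] by simp
  qed
  have S: "(\<lambda>p q. \<Sum>b\<in>X. \<Sum>a\<in>X. \<Sum>c\<in>X. T b a c p q) \<in> L"
    using T fin by (intro sub_sum[OF sub]) auto
  have eq: "inc_mult X g f p q = (\<Sum>b\<in>X. \<Sum>a\<in>X. \<Sum>c\<in>X. T b a c p q)" for p q
  proof -
    have inner: "(\<Sum>a\<in>X. \<Sum>c\<in>X. T b a c p q) = g p b * f b q" for b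
    proof -
      have "(\<Sum>a\<in>X. \<Sum>c\<in>X. T b a c p q) = (\<Sum>a\<in>X. if p = a then (\<Sum>c\<in>X. if q = c then g a b * f b c else 0) else 0)"
        unfolding T_def by (intro sum.cong refl) auto
      also have "\<dots> = (if p \<in> X \<and> q \<in> X then g p b * f b q else 0)"
        using fin by (simp add: sum.delta sum.delta')
      also have "\<dots> = g p b * f b q"
        using g finc unfolding incidence_def by auto
      finally show ?thesis .
    qed
    have "inc_mult X g f p q = (\<Sum>b\<in>X. g p b * f b q)"
      unfolding inc_mult_def
    proof (rule sum.mono_neutral_left)
      show "finite X" by (rule fin)
      show "{t \<in> X. p \<le> t \<and> t \<le> q} \<subseteq> X" by auto
      show "\<forall>i\<in>X - {t \<in> X. p \<le> t \<and> t \<le> q}. g p i * f i q = 0"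
        using g finc unfolding incidence_def by auto
    qed
    thus ?thesis using inner by simp
  qed
  have "inc_mult X g f = (\<lambda>p q. \<Sum>b\<in>X. \<Sum>a\<in>X. \<Sum>c\<in>X. T b a c p q)"
    using eq by (intro ext) 
  thus ?thesis using S by simp
qed

lemma lie_J_ideal:
  assumes fin: "finite X" and L: "inc_lie_ideal X L" and LJ: "L \<subseteq> jacobson X"
  shows "inc_ideal X L"
proof -
  have sub: "inc_subspace X L" using lie_sub[OF L] .
  have "inc_mult X f g \<in> L \<and> inc_mult X g f \<in> L" if f: "f \<in> incidence X" and g: "g \<in> L" for f g
  proof
    show 1: "inc_mult X f g \<in> L" using core_left[OF fin L LJ g f] .
    have 2: "inc_bracket X f g \<in> L" using lie_br[OF L f g] .
    have "(\<lambda>x y. inc_mult X f g x y + (-1) * inc_bracket X f g x y) \<in> L"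
      using sub_add[OF sub 1 sub_scale[OF sub 2]] .
    moreover have "(\<lambda>x y. inc_mult X f g x y + (-1) * inc_bracket X f g x y) = inc_mult X g f"
      unfolding inc_bracket_def by (intro ext) simp
    ultimately show "inc_mult X g f \<in> L" by simp
  qed
  thus ?thesis unfolding inc_ideal_def using sub by blast
qed

lemma ideal_lie:
  assumes A: "inc_ideal X A" shows "inc_lie_ideal X A"
proof -
  have sub: "inc_subspace X A" using A unfolding inc_ideal_def by blast
  have "inc_bracket X f g \<in> A" if f: "f \<in> incidence X" and g: "g \<in> A" for f g
  proof -
    have 1: "inc_mult X f g \<in> A" "inc_mult X g f \<in> A" using A f g unfolding inc_ideal_def by blast+
    have "(\<lambda>x y. inc_mult X f g x y + (-1) * inc_mult X g f x y) \<in> A"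
      using sub_add[OF sub 1(1) sub_scale[OF sub 1(2)]] .
    moreover have "(\<lambda>x y. inc_mult X f g x y + (-1) * inc_mult X g f x y) = inc_bracket X f g"
      unfolding inc_bracket_def by (intro ext) simp
    ultimately show ?thesis by simp
  qed
  thus ?thesis unfolding inc_lie_ideal_def using sub by blast
qed

lemma lie_gen_is_lie:
  assumes "S \<subseteq> jacobson X"
  shows "inc_lie_ideal X (lie_ideal_gen X S)" and "lie_ideal_gen X S \<subseteq> jacobson X"
    and "S \<subseteq> lie_ideal_gen X S"
proof -
  define F where "F = {A. inc_lie_ideal X A \<and> S \<subseteq> A}"
  have JF: "jacobson X \<in> F" unfolding F_def using jac_lie assms by blast
  have G: "lie_ideal_gen X S = \<Inter>F" unfolding F_def lie_ideal_gen_def ..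
  show "lie_ideal_gen X S \<subseteq> jacobson X" unfolding G using JF by blast
  show "S \<subseteq> lie_ideal_gen X S" unfolding G F_def by blast
  have s1: "\<Inter>F \<subseteq> incidence X" using JF jac_lie[of X] unfolding inc_lie_ideal_def inc_subspace_def by blast
  have s2: "(\<lambda>x y. 0) \<in> \<Inter>F" unfolding F_def inc_lie_ideal_def inc_subspace_def by blast
  have s3: "\<forall>f\<in>\<Inter>F. \<forall>g\<in>\<Inter>F. (\<lambda>x y. f x y + g x y) \<in> \<Inter>F"
    unfolding F_def inc_lie_ideal_def inc_subspace_def by blast
  have s4: "\<forall>c. \<forall>f\<in>\<Inter>F. (\<lambda>x y. c * f x y) \<in> \<Inter>F"
    unfolding F_def inc_lie_ideal_def inc_subspace_def by blast
  have s5: "\<forall>f\<in>incidence X. \<forall>g\<in>\<Inter>F. inc_bracket X f g \<in> \<Inter>F"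
    unfolding F_def inc_lie_ideal_def by blast
  show "inc_lie_ideal X (lie_ideal_gen X S)" unfolding G inc_lie_ideal_def inc_subspace_def
    using s1 s2 s3 s4 s5 by blast
qed

theorem corollary3p5:
  fixes X :: "'a::order set" and S :: "('a \<Rightarrow> 'a \<Rightarrow> 'k::field) set"
  assumes "finite X" and "poset_connected X" and "S \<subseteq> jacobson X"
  shows "ideal_gen X S = lie_ideal_gen X S \<and>
    (\<forall>L::('a \<Rightarrow> 'a \<Rightarrow> 'k) set. inc_lie_ideal X L \<and> L \<subseteq> jacobson X \<longrightarrow> inc_ideal X L)"
proof
  have P2: "\<forall>L::('a \<Rightarrow> 'a \<Rightarrow> 'k) set. inc_lie_ideal X L \<and> L \<subseteq> jacobson X \<longrightarrow> inc_ideal X L"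
    using lie_J_ideal[OF assms(1)] by blast
  thus "\<forall>L::('a \<Rightarrow> 'a \<Rightarrow> 'k) set. inc_lie_ideal X L \<and> L \<subseteq> jacobson X \<longrightarrow> inc_ideal X L" .
  have I: "inc_ideal X (lie_ideal_gen X S)"
    using P2 lie_gen_is_lie[OF assms(3)] by blast
  have "ideal_gen X S \<subseteq> lie_ideal_gen X S"
    unfolding ideal_gen_def using I lie_gen_is_lie(3)[OF assms(3)] by blast
  moreover have "lie_ideal_gen X S \<subseteq> ideal_gen X S"
    unfolding ideal_gen_def lie_ideal_gen_def using ideal_lie by blast
  ultimately show "ideal_gen X S = lie_ideal_gen X S" by blast
qed

end
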